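(* Let $\gamma>0$. An entire function $f(z)=\sum_{n=0}^\infty a_nz^n$ belongs to $\mathcal{H}_\gamma$ if and only if $$\sum_{k=0}^\infty\frac{k!\,\gamma^{2k}}{2^k}\left|\sum_{j=0}^{\lfloor k/2\rfloor}\frac{a_{k-2j}}{\gamma^{2j}j!}\right|^2<\infty.$$
   Context: For $\gamma>0$, $\mathcal{H}_\gamma$ is the space of entire functions $f$ on $\mathbb{C}$ with $\frac{2}{\pi\gamma^2}\int_{\mathbb{C}}|f(z)|^2\exp\left(\frac{(z-\overline z)^2}{\gamma^2}\right)dA(z)<\infty$, $dA$ Lebesgue measure. *)

theory Defs
  imports "HOL-Complex_Analysis.Complex_Analysis"
begin

text \<open>The weight exp((z - conj z)^2/gamma^2) = exp(-4 (Im z)^2/gamma^2) is real and positive;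
  we take its real part to view it as a real number.\<close>
definition H_space :: "real \<Rightarrow> (complex \<Rightarrow> complex) set" where
  "H_space \<gamma> = {f. f holomorphic_on UNIV \<and>
     (\<integral>\<^sup>+ z. ennreal (2 / (pi * \<gamma>^2) * (cmod (f z))^2 *
        Re (exp ((z - cnj z)^2 / (complex_of_real \<gamma>)^2))) \<partial>lborel) < \<infinity>}"

end

theory Submission
  imports Defs "HOL-Probability.Distributions"
begin

abbreviation "PP \<equiv> (lborel::real measure) \<Otimes>\<^sub>M (lborel::real measure)"

lemma meas_Complex[measurable]: "(\<lambda>(x,y). Complex x y) \<in> borel_measurable PP"
proof -
  have "(\<lambda>(x,y). Complex x y) = (\<lambda>p. complex_of_real (fst p) + \<i> * complex_of_real (snd p))"
    by (auto simp: fun_eq_iff complex_eq_iff)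
  then show ?thesis by simp
qed

lemma lborel_complex: "(lborel::complex measure) = distr PP borel (\<lambda>(x,y). Complex x y)"
proof (rule lborel_eqI)
  fix l u :: complex
  assume le: "\<And>b. b \<in> Basis \<Longrightarrow> l \<bullet> b \<le> u \<bullet> b"
  then have le1: "Re l \<le> Re u" and le2: "Im l \<le> Im u"
    using le[of 1] le[of \<i>] by (auto simp: inner_complex_def)
  have "(\<lambda>(x,y). Complex x y) -` box l u \<inter> space PP = {Re l<..<Re u} \<times> {Im l<..<Im u}"
    by (auto simp: box_def Basis_complex_def inner_complex_def space_pair_measure)
  then have "emeasure (distr PP borel (\<lambda>(x,y). Complex x y)) (box l u) =
      emeasure PP ({Re l<..<Re u} \<times> {Im l<..<Im u})"
    by (subst emeasure_distr) auto
  also have "\<dots> = ennreal (Re u - Re l) * ennreal (Im u - Im l)"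
    using le1 le2 by (subst lborel.emeasure_pair_measure_Times) auto
  also have "\<dots> = (\<Prod>b\<in>Basis. (u - l) \<bullet> b)"
    using le1 le2 by (simp add: Basis_complex_def inner_complex_def ennreal_mult[symmetric])
  finally show "emeasure (distr PP borel (\<lambda>(x,y). Complex x y)) (box l u) = (\<Prod>b\<in>Basis. (u - l) \<bullet> b)" .
qed simp

lemma translate_emeasure:
  assumes "B \<in> sets (lborel::real measure)"
  shows "emeasure lborel ((\<lambda>x. t + x) -` B) = emeasure lborel B"
proof -
  have "emeasure lborel ((\<lambda>x. t + x) -` B) = emeasure (distr lborel borel ((+) t)) B"
    using assms by (subst emeasure_distr) auto
  also have "\<dots> = emeasure lborel B" by (simp add: lborel_distr_plus)
  finally show ?thesis .
qed

lemma shear1_PP: "distr PP PP (\<lambda>(x,y). (x + c*y, y)) = PP"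
proof (rule measure_eqI)
  fix A assume "A \<in> sets (distr PP PP (\<lambda>(x,y). (x + c*y, y)))"
  then have A[measurable]: "A \<in> sets PP" by simp
  then have A': "A \<in> sets (borel \<Otimes>\<^sub>M borel)" by (metis sets_lborel sets_pair_measure_cong)
  have M: "(\<lambda>(x,y). (x + c*y, y)) \<in> measurable (borel \<Otimes>\<^sub>M borel) (borel \<Otimes>\<^sub>M borel)" by measurable
  have pre[measurable]: "(\<lambda>(x,y). (x + c*y, y)) -` A \<in> sets (borel \<Otimes>\<^sub>M borel)"
    using measurable_sets[OF M A'] by (simp add: space_pair_measure)
  have "emeasure (distr PP PP (\<lambda>(x,y). (x + c*y, y))) A =
      emeasure PP ((\<lambda>(x,y). (x + c*y, y)) -` A)"
    using A' by (subst emeasure_distr) (auto simp: space_pair_measure)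
  also have "\<dots> = (\<integral>\<^sup>+y. emeasure lborel ((\<lambda>x. (x,y)) -` ((\<lambda>(x,y). (x + c*y, y)) -` A)) \<partial>lborel)"
    by (subst lborel_pair.emeasure_pair_measure_alt2) auto
  also have "\<dots> = (\<integral>\<^sup>+y. emeasure lborel ((\<lambda>x. c*y + x) -` ((\<lambda>x. (x,y)) -` A)) \<partial>lborel)"
    by (intro nn_integral_cong arg_cong2[where f=emeasure]) (auto simp: add.commute)
  also have "\<dots> = (\<integral>\<^sup>+y. emeasure lborel ((\<lambda>x. (x,y)) -` A) \<partial>lborel)"
    using sets_Pair2[OF A] by (intro nn_integral_cong translate_emeasure) auto
  also have "\<dots> = emeasure PP A"
    using A by (subst lborel_pair.emeasure_pair_measure_alt2) auto
  finally show "emeasure (distr PP PP (\<lambda>(x,y). (x + c*y, y))) A = emeasure PP A" .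
qed simp

lemma shear2_PP: "distr PP PP (\<lambda>(x,y). (x, y + c*x)) = PP"
proof (rule measure_eqI)
  fix A assume "A \<in> sets (distr PP PP (\<lambda>(x,y). (x, y + c*x)))"
  then have A[measurable]: "A \<in> sets PP" by simp
  then have A': "A \<in> sets (borel \<Otimes>\<^sub>M borel)" by (metis sets_lborel sets_pair_measure_cong)
  have M: "(\<lambda>(x,y). (x, y + c*x)) \<in> measurable (borel \<Otimes>\<^sub>M borel) (borel \<Otimes>\<^sub>M borel)" by measurable
  have pre[measurable]: "(\<lambda>(x,y). (x, y + c*x)) -` A \<in> sets (borel \<Otimes>\<^sub>M borel)"
    using measurable_sets[OF M A'] by (simp add: space_pair_measure)
  have "emeasure (distr PP PP (\<lambda>(x,y). (x, y + c*x))) A =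
      emeasure PP ((\<lambda>(x,y). (x, y + c*x)) -` A)"
    using A' by (subst emeasure_distr) (auto simp: space_pair_measure)
  also have "\<dots> = (\<integral>\<^sup>+x. emeasure lborel (Pair x -` ((\<lambda>(x,y). (x, y + c*x)) -` A)) \<partial>lborel)"
    by (subst lborel.emeasure_pair_measure_alt) auto
  also have "\<dots> = (\<integral>\<^sup>+x. emeasure lborel ((\<lambda>y. c*x + y) -` (Pair x -` A)) \<partial>lborel)"
    by (intro nn_integral_cong arg_cong2[where f=emeasure]) (auto simp: add.commute)
  also have "\<dots> = (\<integral>\<^sup>+x. emeasure lborel (Pair x -` A) \<partial>lborel)"
    using sets_Pair1[OF A] by (intro nn_integral_cong translate_emeasure) auto
  also have "\<dots> = emeasure PP A"
    using A by (subst lborel.emeasure_pair_measure_alt) auto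
  finally show "emeasure (distr PP PP (\<lambda>(x,y). (x, y + c*x))) A = emeasure PP A" .
qed simp

lemma transfer_PP:
  assumes [measurable]: "T \<in> PP \<rightarrow>\<^sub>M PP" and inv: "distr PP PP T = PP"
    and S[measurable]: "S \<in> borel_measurable (borel::complex measure)"
    and eq: "\<And>x y. S (Complex x y) = (case T (x,y) of (a,b) \<Rightarrow> Complex a b)"
  shows "distr (lborel::complex measure) borel S = lborel"
proof -
  have "distr (distr PP borel (\<lambda>(x,y). Complex x y)) borel S = distr PP borel (S \<circ> (\<lambda>(x,y). Complex x y))"
    by (rule distr_distr) auto
  also have "S \<circ> (\<lambda>(x,y). Complex x y) = (\<lambda>(x,y). Complex x y) \<circ> T"
    by (auto simp: fun_eq_iff eq)
  also have "distr PP borel ((\<lambda>(x,y). Complex x y) \<circ> T) = distr (distr PP PP T) borel (\<lambda>(x,y). Complex x y)"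
    by (rule distr_distr[symmetric]) auto
  also have "\<dots> = distr PP borel (\<lambda>(x,y). Complex x y)" by (simp add: inv)
  finally show ?thesis by (simp only: lborel_complex[symmetric])
qed

lemma shear1: "distr (lborel::complex measure) borel (\<lambda>z. Complex (Re z + c * Im z) (Im z)) = lborel"
  by (rule transfer_PP[OF _ shear1_PP]) auto

lemma shear2: "distr (lborel::complex measure) borel (\<lambda>z. Complex (Re z) (Im z + c * Re z)) = lborel"
  by (rule transfer_PP[OF _ shear2_PP]) auto

lemma rotation_invariant:
  assumes u: "cmod u = 1" and "Re u \<noteq> -1"
  shows "distr (lborel::complex measure) borel (\<lambda>z. u * z) = lborel"
proof -
  define c s where "c = Re u" and "s = Im u"
  have cs: "c^2 + s^2 = 1" using u by (simp add: c_def s_def cmod_def)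
  have c1: "1 + c \<noteq> 0" using assms by (simp add: c_def)
  define t where "t = s / (1 + c)"
  let ?S1 = "\<lambda>z. Complex (Re z + (-t) * Im z) (Im z)"
  let ?S2 = "\<lambda>z. Complex (Re z) (Im z + s * Re z)"
  have eq: "(\<lambda>z. u * z) = ?S1 \<circ> ?S2 \<circ> ?S1"
  proof (rule ext)
    fix z
    have a: "1 - t * s = c" using cs c1 unfolding t_def by (simp add: field_simps power2_eq_square)
    have ss: "s * s = 1 - c * c" using cs by (simp add: power2_eq_square)
    have e: "2 * (1 + c) - (1 - c * c) = (1 + c) * (1 + c)" by (simp add: algebra_simps)
    have b: "t * (2 - s * t) = s"
    proof -
      have "t * (2 - s * t) = (s * (2 * (1 + c)) - s * (s * s)) / ((1 + c) * (1 + c))"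
        unfolding t_def using c1 by (simp add: field_simps)
      also have "\<dots> = s * (2 * (1 + c) - s * s) / ((1 + c) * (1 + c))" by (simp add: right_diff_distrib)
      also have "\<dots> = s * (2 * (1 + c) - (1 - c * c)) / ((1 + c) * (1 + c))" by (simp only: ss)
      also have "\<dots> = s * ((1 + c) * (1 + c)) / ((1 + c) * (1 + c))" by (simp only: e)
      also have "\<dots> = s" using c1 by simp
      finally show ?thesis .
    qed
    show "u * z = (?S1 \<circ> ?S2 \<circ> ?S1) z"
    proof (rule complex_eqI)
      have "Re ((?S1 \<circ> ?S2 \<circ> ?S1) z) = Re z * (1 - t * s) - Im z * (t * (2 - s * t))"
        by (simp add: algebra_simps)
      then show "Re (u * z) = Re ((?S1 \<circ> ?S2 \<circ> ?S1) z)" unfolding a b by (simp add: c_def s_def)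
      have "Im ((?S1 \<circ> ?S2 \<circ> ?S1) z) = s * Re z + Im z * (1 - t * s)"
        by (simp add: algebra_simps)
      then show "Im (u * z) = Im ((?S1 \<circ> ?S2 \<circ> ?S1) z)" unfolding a by (simp add: c_def s_def)
    qed
  qed
  have m1[measurable]: "?S1 \<in> borel_measurable borel"
    by (rule borel_measurable_continuous_onI) (auto intro!: continuous_intros)
  have m2[measurable]: "?S2 \<in> borel_measurable borel"
    by (rule borel_measurable_continuous_onI) (auto intro!: continuous_intros)
  have "distr (lborel::complex measure) borel (?S1 \<circ> ?S2 \<circ> ?S1) =
     distr (distr (distr lborel borel ?S1) borel ?S2) borel ?S1"
    by (simp add: distr_distr comp_assoc)
  also have "\<dots> = lborel" by (simp only: shear1 shear2)
  finally show ?thesis by (simp only: eq)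
qed

lemma rot_zero:
  fixes h :: "complex \<Rightarrow> complex"
  assumes jk: "j \<noteq> k" and h[measurable]: "h \<in> borel_measurable borel"
    and rot: "\<And>u z. cmod u = 1 \<Longrightarrow> h (u * z) = u ^ j * cnj u ^ k * h z"
  shows "integral\<^sup>L lborel h = 0"
proof -
  define \<theta> where "\<theta> = pi / (2 * (real j + real k))"
  have jk0: "real j + real k \<ge> 1" using jk by linarith
  have th0: "\<theta> > 0" unfolding \<theta>_def using jk0 by simp
  have th1: "\<theta> * (real j + real k) = pi / 2" unfolding \<theta>_def using jk0 by (simp add: field_simps)
  have th2: "\<theta> \<le> pi / 2"
  proof -
    have "\<theta> * 1 \<le> \<theta> * (real j + real k)" using jk0 th0 by (intro mult_left_mono) auto
    then show ?thesis using th1 by simp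
  qed
  define u where "u = cis \<theta>"
  have u1: "cmod u = 1" by (simp add: u_def)
  have "cos \<theta> \<ge> 0" using th0 th2 by (intro cos_ge_zero) auto
  then have ur: "Re u \<noteq> -1" by (simp add: u_def)
  define m where "m = u ^ j * cnj u ^ k"
  have c1: "cnj u = cis (- \<theta>)" by (simp add: u_def complex_eq_iff)
  have c2: "cnj u ^ k = cis (real k * (- \<theta>))" unfolding c1 by (rule Complex.DeMoivre)
  have c3: "u ^ j = cis (real j * \<theta>)" unfolding u_def by (rule Complex.DeMoivre)
  have m: "m = cis ((real j - real k) * \<theta>)"
    unfolding m_def c2 c3 cis_mult by (simp add: algebra_simps)
  have m1: "m \<noteq> 1"
  proof
    assume "m = 1"
    moreover have "Im m = sin ((real j - real k) * \<theta>)" using m by simp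
    ultimately have "sin ((real j - real k) * \<theta>) = 0" by simp
    moreover have "\<bar>(real j - real k) * \<theta>\<bar> < pi"
    proof -
      have "\<bar>(real j - real k) * \<theta>\<bar> = \<bar>real j - real k\<bar> * \<theta>" using th0 by (simp add: abs_mult)
      also have "\<dots> \<le> (real j + real k) * \<theta>" using th0 by (intro mult_right_mono) auto
      also have "\<dots> = pi / 2" using th1 by (simp add: mult.commute)
      finally show ?thesis using pi_gt_zero by linarith
    qed
    ultimately have "(real j - real k) * \<theta> = 0"
      using sin_zero_pi_iff by blast
    then show False using jk th0 by simp
  qed
  have "integral\<^sup>L lborel h = integral\<^sup>L (distr lborel borel (\<lambda>z. u * z)) h"
    by (simp add: rotation_invariant[OF u1 ur])
  also have "\<dots> = integral\<^sup>L lborel (\<lambda>z. h (u * z))"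
    by (rule integral_distr) auto
  also have "\<dots> = integral\<^sup>L lborel (\<lambda>z. m * h z)"
    by (simp add: rot[OF u1] m_def)
  also have "\<dots> = m * integral\<^sup>L lborel h" by simp
  finally have "(1 - m) * integral\<^sup>L lborel h = 0" by (simp add: algebra_simps)
  then show ?thesis using m1 by simp
qed

lemma emeasure_sq_less:
  "emeasure (lborel::complex measure) {z. (cmod z)^2 < r} = ennreal (pi * max 0 r)"
proof (cases "r > 0")
  case True
  have "{z::complex. (cmod z)^2 < r} = ball 0 (sqrt r)"
  proof (intro set_eqI)
    fix z :: complex
    have "cmod z < sqrt r \<longleftrightarrow> sqrt ((cmod z)^2) < sqrt r" by simp
    also have "\<dots> \<longleftrightarrow> (cmod z)^2 < r" by (rule real_sqrt_less_iff)
    finally show "z \<in> {z. (cmod z)^2 < r} \<longleftrightarrow> z \<in> ball 0 (sqrt r)" by (simp add: dist_norm)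
  qed
  then show ?thesis using True
    by (simp add: emeasure_ball unit_ball_vol_2 mult.commute)
next
  case False
  then have "{z::complex. (cmod z)^2 < r} = {}"
    by (auto simp: not_less) (smt (verit) zero_le_power2)
  then show ?thesis using False by simp
qed

lemma distr_sq:
  "distr (lborel::complex measure) borel (\<lambda>z. - ((cmod z)^2)) =
     density lborel (\<lambda>t. ennreal pi * indicator {..0} t)"
proof (rule measure_eqI_lessThan)
  fix x :: real
  have "emeasure (distr (lborel::complex measure) borel (\<lambda>z. - ((cmod z)^2))) {x<..} =
        emeasure lborel {z::complex. (cmod z)^2 < - x}"
    by (subst emeasure_distr) (auto intro!: arg_cong2[where f=emeasure])
  also have "\<dots> = ennreal (pi * max 0 (-x))" by (rule emeasure_sq_less)
  finally have 1: "emeasure (distr (lborel::complex measure) borel (\<lambda>z. - ((cmod z)^2))) {x<..} = ennreal (pi * max 0 (-x))" .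
  then show "emeasure (distr (lborel::complex measure) borel (\<lambda>z. - ((cmod z)^2))) {x<..} < \<infinity>"
    by simp
  have "emeasure (density lborel (\<lambda>t. ennreal pi * indicator {..0} t)) {x<..}
     = (\<integral>\<^sup>+t. ennreal pi * indicator {x<..0} t \<partial>lborel)"
    by (subst emeasure_density) (auto intro!: nn_integral_cong split: split_indicator)
  also have "\<dots> = ennreal pi * emeasure lborel {x<..0}"
    by (simp add: nn_integral_cmult_indicator)
  also have "\<dots> = ennreal (pi * max 0 (-x))"
  proof (cases "x \<le> 0")
    case True
    then have "max 0 (-x) = -x" by simp
    then show ?thesis using True by (simp add: ennreal_mult'[symmetric])
  next
    case False then show ?thesis by simp
  qed
  finally show "emeasure (distr (lborel::complex measure) borel (\<lambda>z. - ((cmod z)^2))) {x<..} =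
     emeasure (density lborel (\<lambda>t. ennreal pi * indicator {..0} t)) {x<..}"
    using 1 by simp
qed simp_all

lemma radial:
  fixes \<phi> :: "real \<Rightarrow> ennreal" assumes [measurable]: "\<phi> \<in> borel_measurable borel"
  shows "(\<integral>\<^sup>+z. \<phi> ((cmod z)^2) \<partial>(lborel::complex measure)) =
         ennreal pi * (\<integral>\<^sup>+s. \<phi> s * indicator {0..} s \<partial>lborel)"
proof -
  have "(\<integral>\<^sup>+z. \<phi> ((cmod z)^2) \<partial>(lborel::complex measure)) =
        (\<integral>\<^sup>+z. (\<lambda>t. \<phi> (-t)) (- ((cmod z)^2)) \<partial>(lborel::complex measure))" by simp
  also have "\<dots> = (\<integral>\<^sup>+t. \<phi> (-t) \<partial>distr (lborel::complex measure) borel (\<lambda>z. - ((cmod z)^2)))"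
    by (subst nn_integral_distr) auto
  also have "\<dots> = (\<integral>\<^sup>+t. ennreal pi * (indicator {..0} t * \<phi> (-t)) \<partial>lborel)"
    unfolding distr_sq by (subst nn_integral_density) (auto simp: mult.assoc)
  also have "\<dots> = ennreal pi * (\<integral>\<^sup>+t. indicator {..0} t * \<phi> (-t) \<partial>lborel)"
    by (subst nn_integral_cmult) auto
  also have "(\<integral>\<^sup>+t. indicator {..0} t * \<phi> (-t) \<partial>lborel) = (\<integral>\<^sup>+s. \<phi> s * indicator {0..} s \<partial>lborel)"
    by (subst nn_integral_real_affine[where c="-1" and t=0]) (auto intro!: nn_integral_cong simp: mult.commute split: split_indicator)
  finally show ?thesis .
qed

lemma gamma_moment:
  assumes "\<alpha> > 0"
  shows "(\<integral>\<^sup>+z. ennreal ((cmod z)^(2*k) * exp (-\<alpha> * (cmod z)^2)) \<partial>(lborel::complex measure)) =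
         ennreal (pi * fact k / \<alpha>^(k+1))"
proof -
  have "(\<integral>\<^sup>+z. ennreal ((cmod z)^(2*k) * exp (-\<alpha> * (cmod z)^2)) \<partial>(lborel::complex measure)) =
      (\<integral>\<^sup>+z. (\<lambda>s. ennreal (s^k * exp (-\<alpha> * s))) ((cmod z)^2) \<partial>(lborel::complex measure))"
    by (simp add: power_mult)
  also have "\<dots> = ennreal pi * (\<integral>\<^sup>+s. ennreal (s^k * exp (-\<alpha> * s)) * indicator {0..} s \<partial>lborel)"
    by (rule radial) auto
  also have "(\<integral>\<^sup>+s. ennreal (s^k * exp (-\<alpha> * s)) * indicator {0..} s \<partial>lborel)
      = ennreal (1/\<alpha>) * (\<integral>\<^sup>+x. ennreal ((x/\<alpha>)^k * exp (- x)) * indicator {0..} x \<partial>lborel)"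
  proof -
    have ind: "\<And>x. indicator {0..} (x/\<alpha>) = (indicator {0..} x :: ennreal)"
      using assms by (auto simp: zero_le_divide_iff split: split_indicator)
    show ?thesis using assms
    by (subst nn_integral_real_affine[where c="1/\<alpha>" and t=0]) (auto simp: ind)
  qed
  also have "(\<integral>\<^sup>+x. ennreal ((x/\<alpha>)^k * exp (- x)) * indicator {0..} x \<partial>lborel)
      = (\<integral>\<^sup>+x. ennreal (1/\<alpha>^k) * (ennreal (x^k * exp (- x)) * indicator {0..} x) \<partial>lborel)"
    using assms by (intro nn_integral_cong) (auto simp: ennreal_mult'[symmetric] power_divide split: split_indicator)
  also have "\<dots> = ennreal (1/\<alpha>^k) * ennreal (fact k)"
    by (subst nn_integral_cmult) (auto simp: nn_intergal_power_times_exp_Ici)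
  finally show ?thesis using assms
    by (simp add: ennreal_mult'[symmetric] ennreal_mult[symmetric] field_simps)
qed

lemma intK:
  fixes h :: "complex \<Rightarrow> complex"
  assumes "continuous_on UNIV h"
  shows "integrable lborel (\<lambda>z::complex. complex_of_real (indicator (cball 0 R) z) * h z)"
  using borel_integrable_compact[of "cball (0::complex) R" h] assms
  by (simp add: scaleR_conv_of_real continuous_on_subset)

lemma intK_real:
  fixes h :: "complex \<Rightarrow> real"
  assumes "continuous_on UNIV h"
  shows "integrable lborel (\<lambda>z::complex. indicator (cball 0 R) z * h z)"
  using borel_integrable_compact[of "cball (0::complex) R" h] assms
  by (simp add: continuous_on_subset)

lemma series_integral:
  fixes c :: "nat \<Rightarrow> complex" and \<phi> :: "nat \<Rightarrow> complex \<Rightarrow> complex" and F :: "complex \<Rightarrow> complex"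
    and \<psi> :: "complex \<Rightarrow> real"
  assumes int: "\<And>k. integrable lborel (\<phi> k)"
    and sums: "\<And>z. (\<lambda>k. c k * \<phi> k z) sums F z"
    and bound: "\<And>k z. norm (\<phi> k z) \<le> R^k * \<psi> z"
    and int\<psi>: "integrable lborel \<psi>"
    and summ: "summable (\<lambda>k. norm (c k) * R^k)"
    and R: "R \<ge> 0"
  shows "(\<lambda>k. c k * integral\<^sup>L lborel (\<phi> k)) sums integral\<^sup>L lborel F"
proof -
  have psi0: "\<psi> z \<ge> 0" for z using order_trans[OF norm_ge_zero bound[of 0 z]] by simp
  have b2: "norm (c k * \<phi> k z) \<le> norm (c k) * R^k * \<psi> z" for k z
    using bound[of k z] by (simp add: norm_mult mult.assoc mult_left_mono)
  have intf: "integrable lborel (\<lambda>z. c k * \<phi> k z)" for k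
    using int by simp
  have ptw: "summable (\<lambda>k. norm (c k * \<phi> k z))" for z
  proof (rule summable_comparison_test[OF _ summable_mult2[OF summ, of "\<psi> z"]])
    show "\<exists>N. \<forall>n\<ge>N. norm (norm (c n * \<phi> n z)) \<le> norm (c n) * R ^ n * \<psi> z"
      using b2 by auto
  qed
  have ib: "(\<integral>z. norm (c k * \<phi> k z) \<partial>lborel) \<le> norm (c k) * R^k * integral\<^sup>L lborel \<psi>" for k
  proof -
    have "(\<integral>z. norm (c k * \<phi> k z) \<partial>lborel) \<le> (\<integral>z. norm (c k) * R^k * \<psi> z \<partial>lborel)"
      by (intro integral_mono b2 integrable_norm intf) (simp add: int\<psi>)
    then show ?thesis by simp
  qed
  have sumint: "summable (\<lambda>k. \<integral>z. norm (c k * \<phi> k z) \<partial>lborel)"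
  proof (rule summable_comparison_test[OF _ summable_mult2[OF summ, of "integral\<^sup>L lborel \<psi>"]])
    show "\<exists>N. \<forall>n\<ge>N. norm (\<integral>z. norm (c n * \<phi> n z) \<partial>lborel) \<le> norm (c n) * R ^ n * integral\<^sup>L lborel \<psi>"
      using ib by (auto simp: integral_nonneg_AE)
  qed
  have eq: "(\<integral>z. (\<Sum>k. c k * \<phi> k z) \<partial>lborel) = (\<Sum>k. integral\<^sup>L lborel (\<lambda>z. c k * \<phi> k z))"
    by (rule integral_suminf[OF intf _ sumint]) (simp add: ptw)
  have "(\<lambda>z. \<Sum>k. c k * \<phi> k z) = F" using sums by (simp add: sums_unique[symmetric] fun_eq_iff)
  then have eq2: "integral\<^sup>L lborel F = (\<Sum>k. c k * integral\<^sup>L lborel (\<phi> k))" using eq by simp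
  have "summable (\<lambda>k. c k * integral\<^sup>L lborel (\<phi> k))"
  proof (rule summable_comparison_test[OF _ sumint])
    show "\<exists>N. \<forall>n\<ge>N. norm (c n * integral\<^sup>L lborel (\<phi> n)) \<le> (\<integral>z. norm (c n * \<phi> n z) \<partial>lborel)"
      using integral_norm_bound[of lborel "\<lambda>z. c _ * \<phi> _ z"] by auto
  qed
  then show ?thesis using eq2 by (simp add: summable_sums)
qed

lemma fock_disc:
  fixes g :: "complex \<Rightarrow> complex" and b :: "nat \<Rightarrow> complex" and \<alpha> R :: real
  assumes sums: "\<And>z. (\<lambda>k. b k * z^k) sums g z" and cont: "continuous_on UNIV g" and R: "R \<ge> 0"
  shows "(\<integral>\<^sup>+z. ennreal ((cmod (g z))^2 * exp (-\<alpha> * (cmod z)^2)) * indicator (cball 0 R) z \<partial>lborel) =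
         (\<Sum>k. ennreal ((cmod (b k))^2) * (\<integral>\<^sup>+z. ennreal ((cmod z)^(2*k) * exp (-\<alpha> * (cmod z)^2)) * indicator (cball 0 R) z \<partial>lborel))"
proof -
  define K where "K = cball (0::complex) R"
  define w where "w z = exp (-\<alpha> * (cmod z)^2)" for z :: complex
  define \<iota> where "\<iota> z = complex_of_real (indicator K z)" for z
  have wc: "continuous_on UNIV w" unfolding w_def by (intro continuous_intros)
  have wpos: "w z > 0" for z unfolding w_def by simp
  have wnn: "w z \<ge> 0" for z using wpos[of z] by simp
  have absb: "summable (\<lambda>k. cmod (b k) * R^k)"
  proof -
    have "summable (\<lambda>n. b n * complex_of_real (R+1) ^ n)" using sums_summable[OF sums] .
    from powser_insidea[OF this, of "complex_of_real R"] R
    have "summable (\<lambda>n. norm (b n * complex_of_real R ^ n))" by simp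
    then show ?thesis using R by (simp add: norm_mult norm_power)
  qed
  have intI: "integrable lborel (\<lambda>z. \<iota> z * h z)" if "continuous_on UNIV h" for h :: "complex \<Rightarrow> complex"
    using intK[OF that, of R] by (simp add: \<iota>_def K_def)
  have intR: "integrable lborel (\<lambda>z. indicator K z * h z)" if "continuous_on UNIV h" for h :: "complex \<Rightarrow> real"
    using intK_real[OF that, of R] by (simp add: K_def)
  define I where "I j k = integral\<^sup>L lborel (\<lambda>z. \<iota> z * (z^j * cnj z ^ k * of_real (w z)))" for j k
  have I0: "I j k = 0" if "j \<noteq> k" for j k
    unfolding I_def
  proof (rule rot_zero[OF that])
    show "(\<lambda>z. \<iota> z * (z^j * cnj z ^ k * of_real (w z))) \<in> borel_measurable borel"
    proof -
      have cc: "continuous_on UNIV (\<lambda>z. z^j * cnj z ^ k * of_real (w z))"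
        using wc by (auto intro!: continuous_intros)
      show ?thesis using borel_measurable_integrable[OF intI[OF cc]] by simp
    qed
    fix u z :: complex assume u: "cmod u = 1"
    have e1: "\<iota> (u*z) = \<iota> z" "w (u*z) = w z" using u by (simp_all add: \<iota>_def K_def w_def norm_mult indicator_def)
    show "\<iota> (u * z) * ((u * z) ^ j * cnj (u * z) ^ k * complex_of_real (w (u * z))) =
          u ^ j * cnj u ^ k * (\<iota> z * (z ^ j * cnj z ^ k * complex_of_real (w z)))"
      unfolding e1 by (simp add: power_mult_distrib algebra_simps)
  qed
  define J where "J j = integral\<^sup>L lborel (\<lambda>z. indicator K z * ((cmod z)^(2*j) * w z))" for j
  have Ijj: "I j j = of_real (J j)" for j
  proof -
    have "\<iota> z * (z^j * cnj z ^ j * of_real (w z)) = of_real (indicator K z * ((cmod z)^(2*j) * w z))" for z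
    proof -
      have "z^j * cnj z ^ j = (z * cnj z)^j" by (simp add: power_mult_distrib)
      also have "\<dots> = of_real (((cmod z)^2)^j)" by (simp flip: complex_norm_square)
      finally show ?thesis by (simp add: \<iota>_def power_mult)
    qed
    then have "(\<lambda>z. \<iota> z * (z^j * cnj z ^ j * of_real (w z))) = (\<lambda>z. of_real (indicator K z * ((cmod z)^(2*j) * w z)))"
      by (rule ext)
    then show ?thesis unfolding I_def J_def by (simp only: integral_complex_of_real)
  qed
  have inner: "integral\<^sup>L lborel (\<lambda>z. \<iota> z * (z^j * cnj (g z) * of_real (w z))) = cnj (b j) * I j j" for j
  proof -
    have "(\<lambda>k. cnj (b k) * I j k) sums integral\<^sup>L lborel (\<lambda>z. \<iota> z * (z^j * cnj (g z) * of_real (w z)))"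
      unfolding I_def
    proof (rule series_integral[where \<psi>="\<lambda>z. indicator K z * (cmod z ^ j * w z)" and R=R])
      show "integrable lborel (\<lambda>z. \<iota> z * (z ^ j * cnj z ^ k * complex_of_real (w z)))" for k
        by (rule intI) (use wc in \<open>auto intro!: continuous_intros\<close>)
      show "integrable lborel (\<lambda>z. indicator K z * (cmod z ^ j * w z))"
        by (rule intR) (use wc in \<open>auto intro!: continuous_intros\<close>)
      show "summable (\<lambda>k. cmod (cnj (b k)) * R ^ k)" using absb by simp
      show "R \<ge> 0" by fact
      fix z
      have "(\<lambda>k. cnj (b k * z ^ k)) sums cnj (g z)" using sums[of z] by (simp only: sums_cnj)
      from sums_mult2[OF this, of "\<iota> z * z^j * of_real (w z)"]
      show "(\<lambda>k. cnj (b k) * (\<iota> z * (z ^ j * cnj z ^ k * complex_of_real (w z)))) sums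
            (\<iota> z * (z ^ j * cnj (g z) * complex_of_real (w z)))"
        by (simp add: algebra_simps)
    next
      fix k z
      show "cmod (\<iota> z * (z ^ j * cnj z ^ k * complex_of_real (w z))) \<le> R ^ k * (indicator K z * (cmod z ^ j * w z))"
      proof (cases "z \<in> K")
        case True
        then have "cmod z \<le> R" by (simp add: K_def)
        then have "cmod z ^ k \<le> R ^ k" by (simp add: power_mono)
        then have "cmod z ^ k * (cmod z ^ j * w z) \<le> R ^ k * (cmod z ^ j * w z)"
          by (rule mult_right_mono) (use wpos[of z] in auto)
        then show ?thesis using True wpos[of z]
          by (simp add: \<iota>_def norm_mult norm_power mult_ac)
      qed (simp add: \<iota>_def)
    qed
    moreover have "(\<lambda>k. cnj (b k) * I j k) = (\<lambda>k. if k = j then cnj (b k) * I j k else 0)"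
      using I0 by (auto simp: fun_eq_iff)
    ultimately show ?thesis using sums_single[of j "\<lambda>k. cnj (b k) * I j k"] sums_unique2 by metis
  qed
  define L where "L = integral\<^sup>L lborel (\<lambda>z. indicator K z * ((cmod (g z))^2 * w z))"
  have outer: "(\<lambda>j. b j * integral\<^sup>L lborel (\<lambda>z. \<iota> z * (z^j * cnj (g z) * of_real (w z)))) sums
      integral\<^sup>L lborel (\<lambda>z. \<iota> z * (g z * cnj (g z) * of_real (w z)))"
  proof (rule series_integral[where \<psi>="\<lambda>z. indicator K z * (cmod (g z) * w z)" and R=R])
    show "integrable lborel (\<lambda>z. \<iota> z * (z ^ j * cnj (g z) * complex_of_real (w z)))" for j
      by (rule intI) (use wc cont in \<open>auto intro!: continuous_intros\<close>)
    show "integrable lborel (\<lambda>z. indicator K z * (cmod (g z) * w z))"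
      by (rule intR) (use wc cont in \<open>auto intro!: continuous_intros\<close>)
    show "summable (\<lambda>k. cmod (b k) * R ^ k)" using absb by simp
    show "R \<ge> 0" by fact
    fix z
    from sums_mult2[OF sums[of z], of "\<iota> z * cnj (g z) * of_real (w z)"]
    show "(\<lambda>k. b k * (\<iota> z * (z ^ k * cnj (g z) * complex_of_real (w z)))) sums
          (\<iota> z * (g z * cnj (g z) * complex_of_real (w z)))"
      by (simp add: algebra_simps)
  next
    fix k z
    show "cmod (\<iota> z * (z ^ k * cnj (g z) * complex_of_real (w z))) \<le> R ^ k * (indicator K z * (cmod (g z) * w z))"
    proof (cases "z \<in> K")
      case True
      then have "cmod z \<le> R" by (simp add: K_def)
      then have "cmod z ^ k \<le> R ^ k" by (simp add: power_mono)
      then have "cmod z ^ k * (cmod (g z) * w z) \<le> R ^ k * (cmod (g z) * w z)"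
        by (rule mult_right_mono) (use wpos[of z] in auto)
      then show ?thesis using True wpos[of z]
        by (simp add: \<iota>_def norm_mult norm_power mult_ac)
    qed (simp add: \<iota>_def)
  qed
  have e2: "\<iota> z * (g z * cnj (g z) * of_real (w z)) = of_real (indicator K z * ((cmod (g z))^2 * w z))" for z
    by (simp add: \<iota>_def flip: complex_norm_square)
  have e3: "b j * (cnj (b j) * I j j) = of_real ((cmod (b j))^2 * J j)" for j
    by (simp add: Ijj mult.assoc flip: complex_norm_square)
  from outer have "(\<lambda>j. complex_of_real ((cmod (b j))^2 * J j)) sums complex_of_real L"
    unfolding inner e2 e3 L_def by (simp only: integral_complex_of_real)
  then have sL: "(\<lambda>j. (cmod (b j))^2 * J j) sums L" by (simp only: sums_of_real_iff)
  have J: "(\<integral>\<^sup>+z. ennreal ((cmod z)^(2*k) * w z) * indicator K z \<partial>lborel) = ennreal (J k)" for k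
  proof -
    have "(\<integral>\<^sup>+z. ennreal ((cmod z)^(2*k) * w z) * indicator K z \<partial>lborel) =
          (\<integral>\<^sup>+z. ennreal (indicator K z * ((cmod z)^(2*k) * w z)) \<partial>lborel)"
      by (intro nn_integral_cong) (simp split: split_indicator)
    also have "\<dots> = ennreal (J k)" unfolding J_def
      by (rule nn_integral_eq_integral) (use wc wnn in \<open>auto intro!: intR continuous_intros AE_I2\<close>)
    finally show ?thesis .
  qed
  have J0: "J k \<ge> 0" for k unfolding J_def
    by (rule integral_nonneg_AE) (use wnn in \<open>auto intro!: AE_I2\<close>)
  have "(\<integral>\<^sup>+z. ennreal ((cmod (g z))^2 * w z) * indicator K z \<partial>lborel) =
          (\<integral>\<^sup>+z. ennreal (indicator K z * ((cmod (g z))^2 * w z)) \<partial>lborel)"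
    by (intro nn_integral_cong) (simp split: split_indicator)
  also have "\<dots> = ennreal L" unfolding L_def
    by (rule nn_integral_eq_integral) (use wc wnn cont in \<open>auto intro!: intR continuous_intros AE_I2\<close>)
  also have "\<dots> = (\<Sum>k. ennreal ((cmod (b k))^2 * J k))"
    by (rule suminf_ennreal_eq[OF _ sL, symmetric]) (simp add: J0)
  also have "\<dots> = (\<Sum>k. ennreal ((cmod (b k))^2) * (\<integral>\<^sup>+z. ennreal ((cmod z)^(2*k) * w z) * indicator K z \<partial>lborel))"
    unfolding J by (simp add: ennreal_mult J0)
  finally show ?thesis unfolding K_def w_def .
qed

lemma SUP_cball:
  fixes h :: "complex \<Rightarrow> ennreal"
  assumes [measurable]: "h \<in> borel_measurable borel"
  shows "(SUP n. \<integral>\<^sup>+z. h z * indicator (cball 0 (real n)) z \<partial>lborel) = (\<integral>\<^sup>+z. h z \<partial>lborel)"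
proof -
  have [measurable]: "cball (0::complex) r \<in> sets borel" for r by simp
  have inc: "incseq (\<lambda>n z. h z * indicator (cball 0 (real n)) z)"
    by (auto simp: incseq_def le_fun_def split: split_indicator)
  have pt: "(SUP n. h z * indicator (cball 0 (real n)) z) = h z" for z
  proof (rule antisym)
    show "(SUP n. h z * indicator (cball 0 (real n)) z) \<le> h z"
      by (rule SUP_least) (simp split: split_indicator)
    obtain n :: nat where "cmod z \<le> real n" using real_arch_simple by blast
    then have "h z * indicator (cball 0 (real n)) z = h z" by simp
    then show "h z \<le> (SUP n. h z * indicator (cball 0 (real n)) z)"
      by (metis UNIV_I SUP_upper)
  qed
  have "(\<integral>\<^sup>+z. h z \<partial>lborel) = (\<integral>\<^sup>+z. (SUP n. h z * indicator (cball 0 (real n)) z) \<partial>lborel)"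
    by (simp add: pt)
  also have "\<dots> = (SUP n. \<integral>\<^sup>+z. h z * indicator (cball 0 (real n)) z \<partial>lborel)"
    by (rule nn_integral_monotone_convergence_SUP[OF inc]) measurable
  finally show ?thesis by simp
qed

lemma fock:
  fixes g :: "complex \<Rightarrow> complex" and b :: "nat \<Rightarrow> complex" and \<alpha> :: real
  assumes sums: "\<And>z. (\<lambda>k. b k * z^k) sums g z" and cont: "continuous_on UNIV g" and \<alpha>: "\<alpha> > 0"
  shows "(\<integral>\<^sup>+z. ennreal ((cmod (g z))^2 * exp (-\<alpha> * (cmod z)^2)) \<partial>lborel) =
         (\<Sum>k. ennreal ((cmod (b k))^2 * (pi * fact k / \<alpha>^(k+1))))"
proof -
  have gm[measurable]: "g \<in> borel_measurable borel" using cont by (rule borel_measurable_continuous_onI)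
  let ?hk = "\<lambda>k z. ennreal ((cmod z)^(2*k) * exp (-\<alpha> * (cmod z)^2))"
  let ?c = "\<lambda>k. ennreal ((cmod (b k))^2)"
  have inc: "incseq (\<lambda>n. ?c k * (\<integral>\<^sup>+z. ?hk k z * indicator (cball 0 (real n)) z \<partial>lborel))" for k
    by (auto simp: incseq_def intro!: mult_left_mono nn_integral_mono split: split_indicator)
  have "(\<integral>\<^sup>+z. ennreal ((cmod (g z))^2 * exp (-\<alpha> * (cmod z)^2)) \<partial>lborel) =
      (SUP n. \<integral>\<^sup>+z. ennreal ((cmod (g z))^2 * exp (-\<alpha> * (cmod z)^2)) * indicator (cball 0 (real n)) z \<partial>lborel)"
    by (rule SUP_cball[symmetric]) simp
  also have "\<dots> = (SUP n. \<Sum>k. ?c k * (\<integral>\<^sup>+z. ?hk k z * indicator (cball 0 (real n)) z \<partial>lborel))"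
    by (simp only: fock_disc[OF sums cont of_nat_0_le_iff])
  also have "\<dots> = (\<Sum>k. SUP n. ?c k * (\<integral>\<^sup>+z. ?hk k z * indicator (cball 0 (real n)) z \<partial>lborel))"
    by (rule ennreal_suminf_SUP_eq[OF inc, symmetric])
  also have "\<dots> = (\<Sum>k. ?c k * (SUP n. \<integral>\<^sup>+z. ?hk k z * indicator (cball 0 (real n)) z \<partial>lborel))"
    by (simp only: SUP_mult_left_ennreal)
  also have "\<dots> = (\<Sum>k. ?c k * (\<integral>\<^sup>+z. ?hk k z \<partial>lborel))"
    by (subst SUP_cball) simp_all
  also have "\<dots> = (\<Sum>k. ?c k * ennreal (pi * fact k / \<alpha>^(k+1)))"
    by (simp only: gamma_moment[OF \<alpha>])
  also have "\<dots> = (\<Sum>k. ennreal ((cmod (b k))^2 * (pi * fact k / \<alpha>^(k+1))))"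
    by (rule suminf_cong) (rule ennreal_mult'[symmetric], simp)
  finally show ?thesis .
qed

lemma exp_series_even:
  fixes \<gamma> :: real and z :: complex
  defines "e \<equiv> \<lambda>n. if even n then 1 / (complex_of_real \<gamma> ^ n * fact (n div 2)) else (0::complex)"
  shows "(\<lambda>n. e n * z^n) sums exp (z^2 / (complex_of_real \<gamma>)^2)"
proof -
  have "(\<lambda>m. (\<lambda>n. e n * z^n) (2 * m)) sums exp (z^2 / (complex_of_real \<gamma>)^2)"
  proof -
    have "(\<lambda>m. (z^2 / (complex_of_real \<gamma>)^2)^m /\<^sub>R fact m) sums exp (z^2 / (complex_of_real \<gamma>)^2)"
      by (rule exp_converges)
    moreover have "(z^2 / (complex_of_real \<gamma>)^2)^m /\<^sub>R fact m = e (2*m) * z^(2*m)" for m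
      by (simp add: e_def power_divide scaleR_conv_of_real field_simps flip: power_mult)
    ultimately show ?thesis by simp
  qed
  moreover have "strict_mono (\<lambda>m::nat. 2 * m)" by (auto simp: strict_mono_def)
  moreover have "e n * z^n = 0" if "n \<notin> range (\<lambda>m::nat. 2 * m)" for n
    using that by (auto simp: e_def elim!: evenE)
  ultimately show ?thesis using sums_mono_reindex[of "\<lambda>m::nat. 2 * m" "\<lambda>n. e n * z^n"] by blast
qed

lemma coeff_reindex:
  fixes \<gamma> :: real and a :: "nat \<Rightarrow> complex"
  defines "e \<equiv> \<lambda>n. if even n then 1 / (complex_of_real \<gamma> ^ n * fact (n div 2)) else (0::complex)"
  shows "(\<Sum>i\<le>k. a i * e (k - i)) = (\<Sum>j = 0..k div 2. a (k - 2 * j) / (complex_of_real \<gamma> ^ (2 * j) * fact j))"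
proof -
  have "(\<Sum>i\<le>k. a i * e (k - i)) = (\<Sum>m\<le>k. a (k - m) * e m)"
    by (rule sum.reindex_bij_witness[of _ "\<lambda>m. k - m" "\<lambda>i. k - i"]) auto
  also have "\<dots> = (\<Sum>m\<in>(\<lambda>j. 2 * j) ` {0..k div 2}. a (k - m) * e m)"
  proof (rule sum.mono_neutral_right)
    show "(\<lambda>j. 2 * j) ` {0..k div 2} \<subseteq> {..k}" by auto
    show "\<forall>m\<in>{..k} - (\<lambda>j. 2 * j) ` {0..k div 2}. a (k - m) * e m = 0"
    proof
      fix m assume m: "m \<in> {..k} - (\<lambda>j. 2 * j) ` {0..k div 2}"
      show "a (k - m) * e m = 0"
      proof (cases "even m")
        case True
        then have "m = 2 * (m div 2)" by simp
        moreover have "m div 2 \<in> {0..k div 2}" using m by (auto intro: div_le_mono)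
        ultimately show ?thesis using m by blast
      qed (simp add: e_def)
    qed
  qed simp
  also have "\<dots> = (\<Sum>j = 0..k div 2. a (k - 2 * j) * e (2 * j))"
    by (subst sum.reindex) (auto simp: inj_on_def)
  also have "\<dots> = (\<Sum>j = 0..k div 2. a (k - 2 * j) / (complex_of_real \<gamma> ^ (2 * j) * fact j))"
    by (simp add: e_def)
  finally show ?thesis .
qed

lemma product_series:
  fixes \<gamma> :: real and a :: "nat \<Rightarrow> complex" and f :: "complex \<Rightarrow> complex"
  assumes sums: "\<And>z. (\<lambda>n. a n * z ^ n) sums f z"
  shows "(\<lambda>k. (\<Sum>j = 0..k div 2. a (k - 2 * j) / (complex_of_real \<gamma> ^ (2 * j) * fact j)) * z^k) sums
           (f z * exp (z^2 / (complex_of_real \<gamma>)^2))"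
proof -
  define e where "e = (\<lambda>n. if even n then 1 / (complex_of_real \<gamma> ^ n * fact (n div 2)) else (0::complex))"
  have se: "(\<lambda>n. e n * w^n) sums exp (w^2 / (complex_of_real \<gamma>)^2)" for w
    unfolding e_def by (rule exp_series_even)
  define x where "x = complex_of_real (cmod z + 1)"
  have zx: "norm z < norm x" by (simp add: x_def)
  have n1: "summable (\<lambda>n. norm (a n * z^n))"
    by (rule powser_insidea[OF sums_summable[OF sums[of x]] zx])
  have n2: "summable (\<lambda>n. norm (e n * z^n))"
    by (rule powser_insidea[OF sums_summable[OF se[of x]] zx])
  have "(\<lambda>k. \<Sum>i\<le>k. (a i * z^i) * (e (k - i) * z^(k - i))) sums ((\<Sum>k. a k * z^k) * (\<Sum>k. e k * z^k))"
    by (rule Cauchy_product_sums[OF n1 n2])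
  also have "(\<Sum>k. a k * z^k) = f z" using sums[of z] by (simp add: sums_unique[symmetric])
  also have "(\<Sum>k. e k * z^k) = exp (z^2 / (complex_of_real \<gamma>)^2)" using se[of z] by (simp add: sums_unique[symmetric])
  also have "(\<lambda>k. \<Sum>i\<le>k. (a i * z^i) * (e (k - i) * z^(k - i))) =
             (\<lambda>k. (\<Sum>j = 0..k div 2. a (k - 2 * j) / (complex_of_real \<gamma> ^ (2 * j) * fact j)) * z^k)"
  proof (rule ext)
    fix k
    have "(\<Sum>i\<le>k. (a i * z^i) * (e (k - i) * z^(k - i))) = (\<Sum>i\<le>k. a i * e (k - i)) * z^k"
      by (auto simp: sum_distrib_right intro!: sum.cong simp flip: power_add mult.assoc)
    also have "(\<Sum>i\<le>k. a i * e (k - i)) = (\<Sum>j = 0..k div 2. a (k - 2 * j) / (complex_of_real \<gamma> ^ (2 * j) * fact j))"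
      unfolding e_def by (rule coeff_reindex)
    finally show "(\<Sum>i\<le>k. (a i * z^i) * (e (k - i) * z^(k - i))) =
       (\<Sum>j = 0..k div 2. a (k - 2 * j) / (complex_of_real \<gamma> ^ (2 * j) * fact j)) * z^k" .
  qed
  finally show ?thesis .
qed

lemma weight_identity:
  fixes \<gamma> :: real and z w :: complex
  assumes "\<gamma> > 0"
  shows "Re (exp ((z - cnj z)^2 / (complex_of_real \<gamma>)^2)) =
         (cmod (exp (z^2 / (complex_of_real \<gamma>)^2)))^2 * exp (- (2 / \<gamma>^2) * (cmod z)^2)"
proof -
  have "(z - cnj z)^2 / (complex_of_real \<gamma>)^2 = complex_of_real (- 4 * (Im z)^2 / \<gamma>^2)"
    by (simp add: complex_eq_iff power2_eq_square)
  then have l: "Re (exp ((z - cnj z)^2 / (complex_of_real \<gamma>)^2)) = exp (- 4 * (Im z)^2 / \<gamma>^2)"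
    by (simp only: exp_of_real Re_complex_of_real)
  have "Re (z^2 / (complex_of_real \<gamma>)^2) = ((Re z)^2 - (Im z)^2) / \<gamma>^2"
    by (simp add: power2_eq_square)
  then have "cmod (exp (z^2 / (complex_of_real \<gamma>)^2)) = exp (((Re z)^2 - (Im z)^2) / \<gamma>^2)"
    by simp
  then have "(cmod (exp (z^2 / (complex_of_real \<gamma>)^2)))^2 * exp (- (2 / \<gamma>^2) * (cmod z)^2) =
      exp (((Re z)^2 - (Im z)^2) / \<gamma>^2 + ((Re z)^2 - (Im z)^2) / \<gamma>^2 + (- (2 / \<gamma>^2) * (cmod z)^2))"
    by (simp only: power2_eq_square exp_add)
  also have "((Re z)^2 - (Im z)^2) / \<gamma>^2 + ((Re z)^2 - (Im z)^2) / \<gamma>^2 + (- (2 / \<gamma>^2) * (cmod z)^2)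
      = - 4 * (Im z)^2 / \<gamma>^2"
    using assms by (simp add: cmod_power2 field_simps)
  finally show ?thesis using l by simp
qed

theorem mainTheorem7:
  fixes \<gamma> :: real and f :: "complex \<Rightarrow> complex" and a :: "nat \<Rightarrow> complex"
  assumes "\<gamma> > 0"
    and "f holomorphic_on UNIV"
    and "\<And>z. (\<lambda>n. a n * z ^ n) sums f z"
  shows "f \<in> H_space \<gamma> \<longleftrightarrow>
    summable (\<lambda>k. fact k * \<gamma> ^ (2 * k) / 2 ^ k *
      (cmod (\<Sum>j = 0..k div 2. a (k - 2 * j) / (complex_of_real \<gamma> ^ (2 * j) * fact j)))^2)"
proof -
  note \<gamma> = assms(1)
  define b where "b k = (\<Sum>j = 0..k div 2. a (k - 2 * j) / (complex_of_real \<gamma> ^ (2 * j) * fact j))" for k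
  define g where "g z = f z * exp (z^2 / (complex_of_real \<gamma>)^2)" for z
  define \<alpha> where "\<alpha> = 2 / \<gamma>^2"
  have \<alpha>: "\<alpha> > 0" using \<gamma> by (simp add: \<alpha>_def)
  have gs: "(\<lambda>k. b k * z^k) sums g z" for z
    unfolding b_def g_def by (rule product_series[OF assms(3)])
  have fc: "continuous_on UNIV f" using assms(2) by (rule holomorphic_on_imp_continuous_on)
  have gc: "continuous_on UNIV g" unfolding g_def using fc \<gamma> by (auto intro!: continuous_intros)
  define C where "C = 2 / (pi * \<gamma>^2)"
  have C: "C > 0" using \<gamma> by (simp add: C_def)
  define T where "T k = (cmod (b k))^2 * (pi * fact k / \<alpha>^(k+1))" for k
  have T0: "T k \<ge> 0" for k using \<alpha> by (simp add: T_def)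
  have int: "(\<integral>\<^sup>+ z. ennreal (2 / (pi * \<gamma>^2) * (cmod (f z))^2 *
        Re (exp ((z - cnj z)^2 / (complex_of_real \<gamma>)^2))) \<partial>lborel) =
      ennreal C * (\<Sum>k. ennreal (T k))"
  proof -
    have "(\<integral>\<^sup>+ z. ennreal (2 / (pi * \<gamma>^2) * (cmod (f z))^2 *
        Re (exp ((z - cnj z)^2 / (complex_of_real \<gamma>)^2))) \<partial>lborel) =
        (\<integral>\<^sup>+ z. ennreal C * ennreal ((cmod (g z))^2 * exp (-\<alpha> * (cmod z)^2)) \<partial>lborel)"
    proof (rule nn_integral_cong)
      fix z :: complex
      have e: "Re (exp ((z - cnj z)^2 / (complex_of_real \<gamma>)^2)) =
         (cmod (exp (z^2 / (complex_of_real \<gamma>)^2)))^2 * exp (-\<alpha> * (cmod z)^2)"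
        using weight_identity[OF \<gamma>, of z] unfolding \<alpha>_def .
      have "2 / (pi * \<gamma>^2) * (cmod (f z))^2 * Re (exp ((z - cnj z)^2 / (complex_of_real \<gamma>)^2)) =
            C * ((cmod (g z))^2 * exp (-\<alpha> * (cmod z)^2))"
        unfolding e g_def C_def norm_mult power_mult_distrib by (simp only: mult_ac)
      then show "ennreal (2 / (pi * \<gamma>^2) * (cmod (f z))^2 * Re (exp ((z - cnj z)^2 / (complex_of_real \<gamma>)^2))) =
            ennreal C * ennreal ((cmod (g z))^2 * exp (-\<alpha> * (cmod z)^2))"
        using C by (simp add: ennreal_mult)
    qed
    also have "\<dots> = ennreal C * (\<integral>\<^sup>+ z. ennreal ((cmod (g z))^2 * exp (-\<alpha> * (cmod z)^2)) \<partial>lborel)"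
      using gc by (subst nn_integral_cmult) (auto intro!: borel_measurable_continuous_onI continuous_intros)
    also have "\<dots> = ennreal C * (\<Sum>k. ennreal (T k))"
      unfolding T_def by (simp only: fock[OF gs gc \<alpha>])
    finally show ?thesis .
  qed
  have "f \<in> H_space \<gamma> \<longleftrightarrow> ennreal C * (\<Sum>k. ennreal (T k)) < \<infinity>"
    using assms(2) unfolding H_space_def mem_Collect_eq int by simp
  also have "\<dots> \<longleftrightarrow> (\<Sum>k. ennreal (T k)) < \<infinity>"
    using C by (auto simp: ennreal_mult_less_top)
  also have "\<dots> \<longleftrightarrow> summable T"
  proof
    assume "(\<Sum>k. ennreal (T k)) < \<infinity>"
    then have "(\<Sum>k. ennreal (T k)) \<noteq> top" by simp
    then show "summable T" by (rule summable_suminf_not_top[OF T0])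
  next
    assume "summable T"
    then have "(\<Sum>k. ennreal (T k)) \<noteq> top" by (rule ennreal_suminf_neq_top[OF _ T0])
    then show "(\<Sum>k. ennreal (T k)) < \<infinity>" by (simp add: less_top)
  qed
  also have "T = (\<lambda>k. (pi * \<gamma>^2 / 2) * (fact k * \<gamma> ^ (2 * k) / 2 ^ k * (cmod (b k))^2))"
  proof (rule ext)
    fix k
    have g2: "(\<gamma>^2)^(k+1) = \<gamma>^(2*k) * \<gamma>^2"
      by (simp only: power_mult[symmetric] power_add[symmetric]) simp
    have "\<alpha>^(k+1) = (2 * 2^k) / (\<gamma>^(2*k) * \<gamma>^2)" unfolding \<alpha>_def power_divide g2 by simp
    moreover have gen: "y \<noteq> 0 \<Longrightarrow> gg \<noteq> 0 \<Longrightarrow> x \<noteq> 0 \<Longrightarrow>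
        c * (p * fk / ((2 * y) / (x * gg))) = (p * gg / 2) * (fk * x / y * c)" for c p fk x y gg :: real
      by (simp add: field_simps)
    ultimately show "T k = (pi * \<gamma>^2 / 2) * (fact k * \<gamma> ^ (2 * k) / 2 ^ k * (cmod (b k))^2)"
      unfolding T_def using \<gamma> by (simp only: gen) simp_all
  qed
  also have "summable \<dots> \<longleftrightarrow> summable (\<lambda>k. fact k * \<gamma> ^ (2 * k) / 2 ^ k * (cmod (b k))^2)"
    using \<gamma> by (subst summable_cmult_iff) simp
  finally show ?thesis unfolding b_def .
qed


end
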